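(* Let $n>3$ be an integer. The inverse of the circulant matrix $\mathrm{circ}(3,1,0,\ldots,0,1)$ of order $n$ is \[[\mathrm{circ}(3,1,0,\ldots,0,1)]^{-1}=\mathrm{circ}(a_0,a_1,\ldots,a_{n-1}),\] where for $j=0,1,\ldots,n-1$, \[a_j=\frac{2^{n-j}}{\sqrt{5}}\left[\frac{(-3+\sqrt{5})^j}{2^n-(-3+\sqrt{5})^n}-\frac{(-3-\sqrt{5})^j}{2^n-(-3-\sqrt{5})^n}\right].\]
   Context: For $c_0,\dots,c_{k-1}$, $\mathrm{circ}(c_0,\ldots,c_{k-1})$ denotes the $k\times k$ circulant matrix whose $(i,j)$-entry is $c_{(j-i)\bmod k}$ (first row $c_0,\dots,c_{k-1}$, each subsequent row the cyclic right shift of the previous one). Thus $\mathrm{circ}(3,1,0,\ldots,0,1)$ has $3$ on the diagonal, $1$ on the two cyclically adjacent positions, and $0$ elsewhere. *)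

theory Defs
  imports "Jordan_Normal_Form.Matrix"
begin

definition circ :: "(nat \<Rightarrow> 'a) \<Rightarrow> nat \<Rightarrow> 'a mat" where
  "circ c k = mat k k (\<lambda>(i, j). c ((j + k - i) mod k))"

definition circ311 :: "nat \<Rightarrow> real mat" where
  "circ311 n = circ (\<lambda>j. if j = 0 then 3 else if j = 1 \<or> j = n - 1 then 1 else 0) n"

end

theory Submission imports Defs begin
lemma root_not_unit:
  fixes r :: real assumes r: "r^2 + 3*r + 1 = 0" and n: "n > 0"
  shows "r^n \<noteq> 1"
proof
  assume "r^n = 1"
  then have "\<bar>r\<bar> = 1" using power_eq_1_iff[of r n] n by auto
  then have "r = 1 \<or> r = -1" by auto
  with r show False by (auto simp: power2_eq_square)
qed

lemma rec_mid:
  fixes r :: real assumes r: "r^2 + 3*r + 1 = 0" and j: "j \<ge> 1"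
  shows "r^(j+1)/(1-r^n) + 3*(r^j/(1-r^n)) + r^(j-1)/(1-r^n) = 0"
proof -
  obtain i where i: "j = Suc i" using j by (cases j) auto
  have "r^(j+1) + 3*r^j + r^(j-1) = r^i * (r^2+3*r+1)"
    by (simp add: i power2_eq_square algebra_simps)
  also have "... = 0" using r by simp
  finally have "r^(j+1) + 3*r^j + r^(j-1) = 0" .
  then show ?thesis by (simp add: add_divide_distrib[symmetric])
qed

lemma rec_first:
  fixes r :: real assumes r: "r^2 + 3*r + 1 = 0" and n: "n \<ge> 1" and u: "r^n \<noteq> 1"
  shows "r^1/(1-r^n) + 3*(r^0/(1-r^n)) + r^(n-1)/(1-r^n) = r+3"
proof -
  have r0: "r \<noteq> 0" using r by auto
  have inv: "r + 3 = - 1/r" using r r0 by (simp add: field_simps power2_eq_square)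
  obtain m where m: "n = Suc m" using n by (cases n) auto
  have "r + 3 + r^(n-1) = (r^n - 1)/r" using inv r0 by (simp add: m field_simps)
  moreover have "1 - r^n \<noteq> 0" using u by simp
  ultimately have "(r + 3 + r^(n-1))/(1-r^n) = -1/r" using r0 by (simp add: field_simps)
  moreover have "r^1/(1-r^n) + 3*(r^0/(1-r^n)) + r^(n-1)/(1-r^n) = (r + 3 + r^(n-1))/(1-r^n)"
    by (simp add: add_divide_distrib)
  ultimately show ?thesis using inv by simp
qed

lemma rec_last:
  fixes r :: real assumes r: "r^2 + 3*r + 1 = 0" and n: "n \<ge> 2" and u: "r^n \<noteq> 1"
  shows "r^0/(1-r^n) + r^(n-2)/(1-r^n) + 3*(r^(n-1)/(1-r^n)) = 1"
proof -
  obtain m where m: "n = Suc (Suc m)" using n by (metis add_2_eq_Suc le_Suc_ex)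
  have "1 + r^(n-2) + 3*r^(n-1) = 1 - r^n + r^m * (r^2+3*r+1)"
    by (simp add: m power2_eq_square algebra_simps)
  also have "... = 1 - r^n" using r by simp
  finally have e: "1 + r^(n-2) + 3*r^(n-1) = 1 - r^n" .
  have "1 - r^n \<noteq> 0" using u by simp
  then show ?thesis using e by (simp add: add_divide_distrib[symmetric])
qed

lemma modsub: assumes "k < n" "i < n" shows "(k+n-i) mod (n::nat) = (if i \<le> k then k-i else k+n-i)"
proof (cases "i \<le> k")
  case True
  then have e: "k+n-i = (k-i) + n" by simp
  have "(k+n-i) mod n = (k-i) mod n" unfolding e by simp
  also have "... = k-i" using assms by simp
  finally show ?thesis using True by simp
next
  case False then show ?thesis using assms by simp
qed

lemma modsuc: "i < n \<Longrightarrow> (i+1) mod (n::nat) = (if i+1 < n then i+1 else 0)"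
proof -
  assume "i < n"
  then have "\<not> i+1 < n \<Longrightarrow> i+1 = n" by simp
  then show ?thesis by auto
qed

lemma sum3:
  fixes f :: "nat \<Rightarrow> real"
  assumes pw: "\<And>k. k < n \<Longrightarrow> f k = (if k = p then x else 0) + (if k = q then y else 0) + (if k = r then z else 0)"
    and "p < n" "q < n" "r < n"
  shows "(\<Sum>k = 0..<n. f k) = x + y + z"
proof -
  have "(\<Sum>k = 0..<n. f k) = (\<Sum>k = 0..<n. (if k = p then x else 0) + (if k = q then y else 0) + (if k = r then z else 0))"
    using pw by (intro sum.cong) auto
  also have "... = x + y + z" using assms(2-4) by (simp add: sum.distrib)
  finally show ?thesis .
qed

lemma entry1:
  fixes d :: "nat \<Rightarrow> real"
  assumes n: "n > 3" and i: "i < n" and j: "j < n"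
  defines "c \<equiv> (\<lambda>j. if j = 0 then 3 else if j = 1 \<or> j = n - 1 then 1 else (0::real))"
  shows "(\<Sum>k = 0..<n. c ((k+n-i) mod n) * d ((j+n-k) mod n))
     = 3 * d ((j+n-i) mod n) + d (((j+n-i) mod n + n - 1) mod n) + d (((j+n-i) mod n + 1) mod n)"
proof -
  define i1 where "i1 = (i+1) mod n"
  define i2 where "i2 = (i+n-1) mod n"
  have i1': "i1 = (if i+1 < n then i+1 else 0)" unfolding i1_def using modsuc[OF i] .
  have i2': "i2 = (if 1 \<le> i then i-1 else i+n-1)" unfolding i2_def using modsub[OF i, of 1] n by simp
  have d: "i \<noteq> i1" "i \<noteq> i2" "i1 \<noteq> i2" "i1 < n" "i2 < n" using n i unfolding i1' i2' by auto
  have pw: "c ((k+n-i) mod n) * d ((j+n-k) mod n) =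
     (if k = i then 3 * d ((j+n-i) mod n) else 0) + (if k = i1 then d ((j+n-i1) mod n) else 0)
     + (if k = i2 then d ((j+n-i2) mod n) else 0)" if k: "k < n" for k
  proof -
    have t: "(k+n-i) mod n = (if i \<le> k then k-i else k+n-i)" using modsub[OF k i] .
    have t0: "(k+n-i) mod n = 0 \<longleftrightarrow> k = i" unfolding t using k i by auto
    have t1: "(k+n-i) mod n = 1 \<longleftrightarrow> k = i1" unfolding t i1' using k i n by auto
    have t2: "(k+n-i) mod n = n-1 \<longleftrightarrow> k = i2" unfolding t i2' using k i n by auto
    show ?thesis
    proof (cases "k = i")
      case True then show ?thesis using d t0 unfolding c_def by simp
    next
      case F1: False
      show ?thesis
      proof (cases "k = i1")
        case True then show ?thesis using d t0 t1 F1 n unfolding c_def by simp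
      next
        case F2: False
        show ?thesis
        proof (cases "k = i2")
          case True then show ?thesis using d t0 t1 t2 F1 F2 n unfolding c_def by simp
        next
          case False then show ?thesis using d t0 t1 t2 F1 F2 n unfolding c_def by simp
        qed
      qed
    qed
  qed
  have "(\<Sum>k = 0..<n. c ((k+n-i) mod n) * d ((j+n-k) mod n))
    = 3 * d ((j+n-i) mod n) + d ((j+n-i1) mod n) + d ((j+n-i2) mod n)"
    by (rule sum3[OF pw i d(4,5)])
  moreover have "(j+n-i1) mod n = ((j+n-i) mod n + n - 1) mod n"
  proof -
    have mlt: "(j+n-i) mod n < n" using n by simp
    have A: "((j+n-i) mod n + n - 1) mod n = (if 1 \<le> (j+n-i) mod n then (j+n-i) mod n - 1 else (j+n-i) mod n + n - 1)"
      using modsub[OF mlt, of 1] n by simp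
    have B: "(j+n-i1) mod n = (if i1 \<le> j then j - i1 else j+n-i1)" using modsub[OF j d(4)] .
    show ?thesis unfolding A B unfolding modsub[OF j i] i1' using i j n by (auto split: if_split_asm)
  qed
  moreover have "(j+n-i2) mod n = ((j+n-i) mod n + 1) mod n"
  proof -
    have mlt: "(j+n-i) mod n < n" using n by simp
    have A: "((j+n-i) mod n + 1) mod n = (if (j+n-i) mod n + 1 < n then (j+n-i) mod n + 1 else 0)"
      using modsuc[OF mlt] .
    have B: "(j+n-i2) mod n = (if i2 \<le> j then j - i2 else j+n-i2)" using modsub[OF j d(5)] .
    show ?thesis unfolding A B unfolding modsub[OF j i] i2' using i j n by (auto split: if_split_asm)
  qed
  ultimately show ?thesis by simp
qed
lemma entry2:
  fixes d :: "nat \<Rightarrow> real"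
  assumes n: "n > 3" and i: "i < n" and j: "j < n"
  defines "c \<equiv> (\<lambda>j. if j = 0 then 3 else if j = 1 \<or> j = n - 1 then 1 else (0::real))"
  shows "(\<Sum>k = 0..<n. d ((k+n-i) mod n) * c ((j+n-k) mod n))
     = 3 * d ((j+n-i) mod n) + d (((j+n-i) mod n + n - 1) mod n) + d (((j+n-i) mod n + 1) mod n)"
proof -
  define j1 where "j1 = (j+1) mod n"
  define j2 where "j2 = (j+n-1) mod n"
  have j1': "j1 = (if j+1 < n then j+1 else 0)" unfolding j1_def using modsuc[OF j] .
  have j2': "j2 = (if 1 \<le> j then j-1 else j+n-1)" unfolding j2_def using modsub[OF j, of 1] n by simp
  have d: "j \<noteq> j1" "j \<noteq> j2" "j1 \<noteq> j2" "j1 < n" "j2 < n" using n j unfolding j1' j2' by auto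
  have pw: "d ((k+n-i) mod n) * c ((j+n-k) mod n) =
     (if k = j then 3 * d ((j+n-i) mod n) else 0) + (if k = j2 then d ((j2+n-i) mod n) else 0)
     + (if k = j1 then d ((j1+n-i) mod n) else 0)" if k: "k < n" for k
  proof -
    have t: "(j+n-k) mod n = (if k \<le> j then j-k else j+n-k)" using modsub[OF j k] .
    have t0: "(j+n-k) mod n = 0 \<longleftrightarrow> k = j" unfolding t using k j by auto
    have t1: "(j+n-k) mod n = 1 \<longleftrightarrow> k = j2" unfolding t j2' using k j n by auto
    have t2: "(j+n-k) mod n = n-1 \<longleftrightarrow> k = j1" unfolding t j1' using k j n by auto
    show ?thesis
    proof (cases "k = j")
      case True then show ?thesis using d t0 unfolding c_def by simp
    next
      case F1: False
      show ?thesis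
      proof (cases "k = j2")
        case True then show ?thesis using d t0 t1 F1 n unfolding c_def by simp
      next
        case F2: False
        show ?thesis
        proof (cases "k = j1")
          case True then show ?thesis using d t0 t1 t2 F1 F2 n unfolding c_def by simp
        next
          case False then show ?thesis using d t0 t1 t2 F1 F2 n unfolding c_def by simp
        qed
      qed
    qed
  qed
  have "(\<Sum>k = 0..<n. d ((k+n-i) mod n) * c ((j+n-k) mod n))
    = 3 * d ((j+n-i) mod n) + d ((j2+n-i) mod n) + d ((j1+n-i) mod n)"
    by (rule sum3[OF pw j d(5,4)])
  moreover have "(j2+n-i) mod n = ((j+n-i) mod n + n - 1) mod n"
  proof -
    have mlt: "(j+n-i) mod n < n" using n by simp
    have A: "((j+n-i) mod n + n - 1) mod n = (if 1 \<le> (j+n-i) mod n then (j+n-i) mod n - 1 else (j+n-i) mod n + n - 1)"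
      using modsub[OF mlt, of 1] n by simp
    have B: "(j2+n-i) mod n = (if i \<le> j2 then j2 - i else j2+n-i)" using modsub[OF d(5) i] .
    show ?thesis unfolding A B unfolding modsub[OF j i] j2' using i j n by (auto split: if_split_asm)
  qed
  moreover have "(j1+n-i) mod n = ((j+n-i) mod n + 1) mod n"
  proof -
    have mlt: "(j+n-i) mod n < n" using n by simp
    have A: "((j+n-i) mod n + 1) mod n = (if (j+n-i) mod n + 1 < n then (j+n-i) mod n + 1 else 0)"
      using modsuc[OF mlt] .
    have B: "(j1+n-i) mod n = (if i \<le> j1 then j1 - i else j1+n-i)" using modsub[OF d(4) i] .
    show ?thesis unfolding A B unfolding modsub[OF j i] j1' using i j n by (auto split: if_split_asm)
  qed
  ultimately show ?thesis by simp
qed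
lemma scale2:
  fixes r :: real assumes u: "r^n \<noteq> 1" and j: "j \<le> n"
  shows "2^(n-j) * (2*r)^j / (2^n - (2*r)^n) = r^j/(1-r^n)"
proof -
  have "(2::real)^(n-j) * 2^j = 2^n" using j by (simp add: power_add[symmetric])
  then have A: "2^(n-j) * (2*r)^j = 2^n * r^j" by (simp add: power_mult_distrib mult.assoc[symmetric])
  have B: "(2::real)^n - (2*r)^n = 2^n * (1 - r^n)" by (simp add: power_mult_distrib algebra_simps)
  show ?thesis unfolding A B by simp
qed

theorem mainTheorem3:
  fixes n :: nat
  assumes "n > 3"
  defines "a \<equiv> (\<lambda>j::nat. (2::real) ^ (n - j) / sqrt 5 *
      ((-3 + sqrt 5) ^ j / (2 ^ n - (-3 + sqrt 5) ^ n)
       - (-3 - sqrt 5) ^ j / (2 ^ n - (-3 - sqrt 5) ^ n)))"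
  shows "circ311 n * circ a n = 1\<^sub>m n \<and> circ a n * circ311 n = 1\<^sub>m n"
proof -
  have n: "n > 3" by fact
  define r1 :: real where "r1 = (-3 + sqrt 5)/2"
  define r2 :: real where "r2 = (-3 - sqrt 5)/2"
  define F where "F = (\<lambda>(r::real) j. r^j/(1-r^n))"
  have s5: "sqrt 5 * sqrt 5 = (5::real)" by simp
  have s5p: "sqrt 5 > (0::real)" by simp
  have q1: "r1^2 + 3*r1 + 1 = 0" unfolding r1_def power2_eq_square
    by (simp add: power2_eq_square field_simps)
  have q2: "r2^2 + 3*r2 + 1 = 0" unfolding r2_def power2_eq_square
    by (simp add: power2_eq_square field_simps)
  have u1: "r1^n \<noteq> 1" using root_not_unit[OF q1] n by simp
  have u2: "r2^n \<noteq> 1" using root_not_unit[OF q2] n by simp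
  have e1: "-3 + sqrt 5 = 2 * r1" unfolding r1_def by simp
  have e2: "-3 - sqrt 5 = 2 * r2" unfolding r2_def by simp
  have aeq: "a j = (F r1 j - F r2 j) / sqrt 5" if j: "j \<le> n" for j
  proof -
    have "a j = (2^(n-j) * (2*r1)^j / (2^n - (2*r1)^n) - 2^(n-j) * (2*r2)^j / (2^n - (2*r2)^n)) / sqrt 5"
      unfolding a_def e1 e2 by (simp add: right_diff_distrib diff_divide_distrib ac_simps)
    then show ?thesis unfolding F_def using scale2[OF u1 j] scale2[OF u2 j] by simp
  qed
  have rec: "3 * a m + a ((m+n-1) mod n) + a ((m+1) mod n) = (if m = 0 then 1 else 0)"
    if m: "m < n" for m
  proof -
    consider "m = 0" | "m = n-1" | "1 \<le> m" "m+1 < n" using m by linarith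
    then show ?thesis
    proof cases
      case 1
      have i1: "(m+n-1) mod n = n-1" "(m+1) mod n = 1" using 1 n by auto
      have "3 * a m + a ((m+n-1) mod n) + a ((m+1) mod n) =
        ((F r1 1 + 3 * F r1 0 + F r1 (n-1)) - (F r2 1 + 3 * F r2 0 + F r2 (n-1))) / sqrt 5"
        unfolding i1 1 using n by (simp add: aeq algebra_simps add_divide_distrib diff_divide_distrib)
      also have "... = ((r1 + 3) - (r2 + 3)) / sqrt 5"
        using rec_first[OF q1 _ u1] rec_first[OF q2 _ u2] n unfolding F_def by simp
      also have "... = 1" unfolding r1_def r2_def by (simp add: field_simps)
      finally show ?thesis using 1 by simp
    next
      case 2
      have i1: "(m+n-1) mod n = n-2" "(m+1) mod n = 0"
        using 2 n modsub[of "n-1" n 1] by auto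
      have i3: "(n+n-Suc (Suc 0)) mod n = n-2" using i1 2 n by (simp add: numeral_2_eq_2)
      have "3 * a m + a ((m+n-1) mod n) + a ((m+1) mod n) =
        ((F r1 0 + F r1 (n-2) + 3 * F r1 (n-1)) - (F r2 0 + F r2 (n-2) + 3 * F r2 (n-1))) / sqrt 5"
        unfolding i1 2 using n by (simp add: i3 aeq algebra_simps add_divide_distrib diff_divide_distrib)
      also have "... = 0"
        using rec_last[OF q1 _ u1] rec_last[OF q2 _ u2] n unfolding F_def by simp
      finally show ?thesis using 2 n by simp
    next
      case 3
      have i1: "(m+n-1) mod n = m-1" "(m+1) mod n = m+1" using 3 n by (auto simp: modsub)
      have "3 * a m + a ((m+n-1) mod n) + a ((m+1) mod n) =
        ((F r1 (m+1) + 3 * F r1 m + F r1 (m-1)) - (F r2 (m+1) + 3 * F r2 m + F r2 (m-1))) / sqrt 5"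
        unfolding i1 using 3 n by (simp add: aeq algebra_simps add_divide_distrib diff_divide_distrib)
      also have "... = 0"
        using rec_mid[OF q1 3(1), of n] rec_mid[OF q2 3(1), of n] unfolding F_def by simp
      finally show ?thesis using 3 by simp
    qed
  qed
  have P1: "circ311 n * circ a n = 1\<^sub>m n"
  proof (rule eq_matI)
    fix i j assume i: "i < dim_row (1\<^sub>m n)" and j: "j < dim_col (1\<^sub>m n)"
    then have i: "i < n" and j: "j < n" by auto
    have "(circ311 n * circ a n) $$ (i, j) = (\<Sum>k = 0..<n.
       (\<lambda>j. if j = 0 then 3 else if j = 1 \<or> j = n - 1 then 1 else (0::real)) ((k+n-i) mod n) * a ((j+n-k) mod n))"
      using i j by (simp add: circ311_def circ_def scalar_prod_def)
    also have "... = 3 * a ((j+n-i) mod n) + a (((j+n-i) mod n + n - 1) mod n) + a (((j+n-i) mod n + 1) mod n)"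
      by (rule entry1[OF n i j])
    also have "... = (if (j+n-i) mod n = 0 then 1 else 0)"
      by (rule rec) (use n in simp)
    also have "... = (if i = j then 1 else 0)"
      unfolding modsub[OF j i] using i j by auto
    finally show "(circ311 n * circ a n) $$ (i, j) = 1\<^sub>m n $$ (i, j)" using i j by simp
  qed (auto simp: circ311_def circ_def)
  have P2: "circ a n * circ311 n = 1\<^sub>m n"
  proof (rule eq_matI)
    fix i j assume i: "i < dim_row (1\<^sub>m n)" and j: "j < dim_col (1\<^sub>m n)"
    then have i: "i < n" and j: "j < n" by auto
    have "(circ a n * circ311 n) $$ (i, j) = (\<Sum>k = 0..<n. a ((k+n-i) mod n) *
       (\<lambda>j. if j = 0 then 3 else if j = 1 \<or> j = n - 1 then 1 else (0::real)) ((j+n-k) mod n))"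
      using i j by (simp add: circ311_def circ_def scalar_prod_def)
    also have "... = 3 * a ((j+n-i) mod n) + a (((j+n-i) mod n + n - 1) mod n) + a (((j+n-i) mod n + 1) mod n)"
      by (rule entry2[OF n i j])
    also have "... = (if (j+n-i) mod n = 0 then 1 else 0)"
      by (rule rec) (use n in simp)
    also have "... = (if i = j then 1 else 0)"
      unfolding modsub[OF j i] using i j by auto
    finally show "(circ a n * circ311 n) $$ (i, j) = 1\<^sub>m n $$ (i, j)" using i j by simp
  qed (auto simp: circ311_def circ_def)
  show ?thesis using P1 P2 by simp
qed

end
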